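(* Let $\nu\ge 1$ be an integer and $M\ge1$. For $c\in(0,1)$ let $\chi^2_\nu(c)$ denote the $c$-quantile of the chi-squared distribution with $\nu$ degrees of freedom. Let $K_1^*,\dots,K_M^*$ be real numbers and define, for each $i$, $$c_i^0=\sup\{c\in(0,1)\;:\;K_i^*>\chi^2_\nu(c)\},$$ and, with $\overline{K^*}=\sum_{i=1}^M K_i^*$, $$\overline{c^0}=\sup\Big\{c\in(0,1)\;:\;\overline{K^*}>\sum_{i=1}^M\chi^2_\nu(c)\Big\}.$$ Then $\overline{c^0}\ \ge\ \min_i c_i^0$.
   Context: Interpretation: there are $M$ computing nodes; $K_i^*$ is the observed value of a chi-squared goodness-of-fit test statistic on node $i$ (with $\nu=t-w-1$ degrees of freedom, $t$ the number of cells and $w$ the number of fitted parameters), $c_i^0$ is the confidence level of the fitted local distribution on node $i$, the global test statistic is the sum $\overline{K}=\sum_i K_i$ of the local ones, and $\overline{c^0}$ is the global confidence level. Suprema are taken over the indicated subsets of $(0,1)$. *)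

theory Defs
  imports "HOL-Probability.Probability"
begin

definition chi2_density :: "nat \<Rightarrow> real \<Rightarrow> real" where
  "chi2_density \<nu> x =
     (if x > 0 then x powr (real \<nu> / 2 - 1) * exp (- x / 2)
                    / (2 powr (real \<nu> / 2) * Gamma (real \<nu> / 2))
      else 0)"

definition chi2_cdf :: "nat \<Rightarrow> real \<Rightarrow> real" where
  "chi2_cdf \<nu> x = (LINT t:{..x}|lborel. chi2_density \<nu> t)"

definition chi2_quantile :: "nat \<Rightarrow> real \<Rightarrow> real" where
  "chi2_quantile \<nu> c = Inf {x. chi2_cdf \<nu> x \<ge> c}"

definition sup01 :: "real set \<Rightarrow> real" where
  "sup01 S = (if S = {} then 0 else Sup S)"

definition local_conf :: "nat \<Rightarrow> real \<Rightarrow> real" where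
  "local_conf \<nu> Kstar = sup01 {c \<in> {0<..<1}. Kstar > chi2_quantile \<nu> c}"

definition global_conf :: "nat \<Rightarrow> nat \<Rightarrow> (nat \<Rightarrow> real) \<Rightarrow> real" where
  "global_conf \<nu> M Kstar =
     sup01 {c \<in> {0<..<1}. (\<Sum>i=1..M. Kstar i) > (\<Sum>i=1..M. chi2_quantile \<nu> c)}"

end

theory Submission
  imports Defs
begin

lemma chi2_meas[measurable]: "chi2_density n \<in> borel_measurable borel"
  unfolding chi2_density_def by measurable

lemma chi2_nonneg: assumes "n \<ge> 1" shows "chi2_density n x \<ge> 0"
  using assms unfolding chi2_density_def
  by (auto intro!: divide_nonneg_pos mult_pos_pos Gamma_real_pos)

lemma chi2_h: 
  assumes "n \<ge> 1"
  shows "indicator {0..} (x/2) * (x/2) powr (real n/2 - 1) / exp (x/2)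
     = 2 * Gamma (real n / 2) * chi2_density n x"
proof -
  have G: "Gamma (real n / 2) > 0" using assms by (intro Gamma_real_pos) auto
  show ?thesis
  proof (cases "x > 0")
    case True
    have "(x/2) powr (real n/2 - 1) = x powr (real n/2 - 1) / 2 powr (real n/2 - 1)"
      using True by (simp add: powr_divide)
    also have "2 powr (real n/2 - 1) = 2 powr (real n/2) / 2"
      by (simp add: powr_diff)
    finally have e: "(x/2) powr (real n/2 - 1) = 2 * x powr (real n/2 - 1) / 2 powr (real n/2)" by simp
    show ?thesis using True G unfolding chi2_density_def e
      by (simp add: exp_minus field_simps)
  next
    case False
    then show ?thesis unfolding chi2_density_def by (cases "x = 0") auto
  qed
qed

lemma chi2_nn: assumes "n \<ge> 1" shows "(\<integral>\<^sup>+x. ennreal (chi2_density n x) \<partial>lborel) = 1"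
proof -
  define s where "s = real n / 2"
  have s: "s > 0" using assms by (simp add: s_def)
  define G where "G = Gamma s"
  have G: "G > 0" using s by (simp add: G_def Gamma_real_pos)
  have "ennreal G = (\<integral>\<^sup>+t. ennreal (indicator {0..} t * t powr (s - 1) / exp t) \<partial>lborel)"
    using Gamma_conv_nn_integral_real[OF s] by (simp add: G_def)
  also have "\<dots> = ennreal (1/2) * (\<integral>\<^sup>+x. ennreal (indicator {0..} (0 + 1/2 * x) * (0 + 1/2 * x) powr (s - 1) / exp (0 + 1/2 * x)) \<partial>lborel)"
    using nn_integral_real_affine[where c="1/2" and t=0 and f="\<lambda>t. ennreal (indicator {0..} t * t powr (s - 1) / exp t)"] by simp
  also have "\<dots> = ennreal (1/2) * (\<integral>\<^sup>+x. ennreal (2 * G * chi2_density n x) \<partial>lborel)"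
    using chi2_h[OF assms] by (simp add: s_def G_def)
  also have "\<dots> = ennreal (1/2) * (\<integral>\<^sup>+x. ennreal (2 * G) * ennreal (chi2_density n x) \<partial>lborel)"
  proof -
    have "\<And>x. ennreal (2 * G * chi2_density n x) = ennreal (2 * G) * ennreal (chi2_density n x)"
      using G chi2_nonneg[OF assms] by (intro ennreal_mult) auto
    then show ?thesis by simp
  qed
  also have "\<dots> = ennreal (1/2) * ennreal (2 * G) * (\<integral>\<^sup>+x. ennreal (chi2_density n x) \<partial>lborel)"
    by (simp add: nn_integral_cmult mult.assoc)
  also have "ennreal (1/2) * ennreal (2 * G) = ennreal G"
    using G ennreal_mult[of "1/2" "2*G"] by simp
  finally have "ennreal G * 1 = ennreal G * (\<integral>\<^sup>+x. ennreal (chi2_density n x) \<partial>lborel)" by simp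
  then show ?thesis using G
    by (subst (asm) ennreal_mult_cancel_left) auto
qed

lemma chi2_int: assumes "n \<ge> 1"
  shows "integrable lborel (chi2_density n)" "integral\<^sup>L lborel (chi2_density n) = 1"
proof -
  show i: "integrable lborel (chi2_density n)"
    by (rule integrableI_nn_integral_finite[where x=1]) (auto simp: chi2_nn[OF assms] chi2_nonneg[OF assms])
  show "integral\<^sup>L lborel (chi2_density n) = 1"
    by (subst integral_eq_nn_integral) (auto simp: chi2_nn[OF assms] chi2_nonneg[OF assms])
qed

lemma chi2_zero: "x \<le> 0 \<Longrightarrow> chi2_density n x = 0"
  unfolding chi2_density_def by auto

lemma cdf_nonpos: assumes "x \<le> 0" shows "chi2_cdf n x = 0"
proof -
  have "(\<lambda>t. indicator {..x} t *\<^sub>R chi2_density n t) = (\<lambda>t. 0)"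
    using assms by (auto simp: chi2_zero indicator_def)
  then show ?thesis unfolding chi2_cdf_def set_lebesgue_integral_def by simp
qed

lemma cdf_pos: assumes "b \<ge> 0" shows "chi2_cdf n b = (LINT t:{0..b}|lborel. chi2_density n t)"
proof -
  have "(\<lambda>t. indicator {..b} t *\<^sub>R chi2_density n t) = (\<lambda>t. indicator {0..b} t *\<^sub>R chi2_density n t)"
  proof
    fix t show "indicator {..b} t *\<^sub>R chi2_density n t = indicator {0..b} t *\<^sub>R chi2_density n t"
      using assms chi2_zero[of t n] by (cases "t \<le> 0") (auto simp: indicator_def)
  qed
  then show ?thesis unfolding chi2_cdf_def set_lebesgue_integral_def by simp
qed

lemma cdf_lim: assumes "n \<ge> 1" shows "((\<lambda>b. chi2_cdf n b) \<longlongrightarrow> 1) at_top"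
proof -
  have si: "set_integrable lborel {0..} (chi2_density n)"
    unfolding set_integrable_def by (rule integrable_mult_indicator) (auto simp: chi2_int[OF assms])
  have "(\<lambda>t. indicator {0..} t *\<^sub>R chi2_density n t) = chi2_density n"
  proof
    fix t show "indicator {0..} t *\<^sub>R chi2_density n t = chi2_density n t"
      using chi2_zero[of t n] by (cases "t \<le> 0") (auto simp: indicator_def)
  qed
  then have e: "(LINT t:{0..}|lborel. chi2_density n t) = 1"
    unfolding set_lebesgue_integral_def using chi2_int[OF assms] by simp
  have "((\<lambda>b. LINT t:{0..b}|lborel. chi2_density n t) \<longlongrightarrow> 1) at_top"
    using tendsto_set_lebesgue_integral_at_top[OF _ si] e by simp
  then show ?thesis
    by (rule Lim_transform_eventually) (auto simp: cdf_pos eventually_at_top_linorder intro!: exI[of _ 0])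
qed

lemma cdf_exists: assumes "n \<ge> 1" "c < 1" shows "\<exists>x. chi2_cdf n x \<ge> c"
proof -
  have "\<forall>\<^sub>F b in at_top. chi2_cdf n b > c"
    using cdf_lim[OF assms(1)] assms(2) by (rule order_tendstoD)
  then obtain b where "chi2_cdf n b > c" 
    by (metis eventually_happens' trivial_limit_at_top_linorder) 
  then show ?thesis by (auto intro: less_imp_le)
qed

lemma q_mono: assumes "n \<ge> 1" "0 < c" "c \<le> c'" "c' < 1"
  shows "chi2_quantile n c \<le> chi2_quantile n c'"
  unfolding chi2_quantile_def
proof (rule cInf_superset_mono)
  show "{x. c' \<le> chi2_cdf n x} \<noteq> {}" using cdf_exists[OF assms(1,4)] by auto
  show "bdd_below {x. c \<le> chi2_cdf n x}"
  proof (rule bdd_belowI[of _ 0])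
    fix x assume "x \<in> {x. c \<le> chi2_cdf n x}"
    then show "0 \<le> x" using cdf_nonpos[of x n] assms(2) by (cases "x \<le> 0") auto
  qed
  show "{x. c' \<le> chi2_cdf n x} \<subseteq> {x. c \<le> chi2_cdf n x}" using assms(3) by auto
qed

lemma sup01_nonneg: assumes "S \<subseteq> {0<..<1}" shows "sup01 S \<ge> 0"
proof (cases "S = {}")
  case False
  then obtain x where x: "x \<in> S" by auto
  have "bdd_above S" using assms by (intro bdd_aboveI[of _ 1]) auto
  then have "x \<le> Sup S" using x by (rule cSup_upper[rotated])
  then show ?thesis using False x assms unfolding sup01_def by auto
qed (simp add: sup01_def)

theorem theorem2:
  fixes \<nu> M :: nat and Kstar :: "nat \<Rightarrow> real"
  assumes "\<nu> \<ge> 1" and "M \<ge> 1"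
  shows "global_conf \<nu> M Kstar \<ge> Min ((\<lambda>i. local_conf \<nu> (Kstar i)) ` {1..M})"
proof -
  define m where "m = Min ((\<lambda>i. local_conf \<nu> (Kstar i)) ` {1..M})"
  define G where "G = {c \<in> {0<..<1}. (\<Sum>i=1..M. Kstar i) > (\<Sum>i=1..M. chi2_quantile \<nu> c)}"
  have gc: "global_conf \<nu> M Kstar = sup01 G" unfolding global_conf_def G_def ..
  have G01: "G \<subseteq> {0<..<1}" unfolding G_def by auto
  have Gb: "bdd_above G" using G01 by (intro bdd_aboveI[of _ 1]) auto
  show ?thesis
  proof (cases "m \<le> 0")
    case True
    then show ?thesis using sup01_nonneg[OF G01] gc m_def by linarith
  next
    case False
    then have m0: "m > 0" by simp
    have mle: "m \<le> local_conf \<nu> (Kstar i)" if "i \<in> {1..M}" for i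
      unfolding m_def using that by (intro Min_le) auto
    have inG: "c \<in> G" if c: "0 < c" "c < m" for c
    proof -
      have lt: "chi2_quantile \<nu> c < Kstar i" if i: "i \<in> {1..M}" for i
      proof -
        define S where "S = {c \<in> {0<..<1}. Kstar i > chi2_quantile \<nu> c}"
        have lc: "local_conf \<nu> (Kstar i) = sup01 S" unfolding local_conf_def S_def ..
        have "S \<noteq> {}"
        proof
          assume "S = {}"
          then have "local_conf \<nu> (Kstar i) = 0" using lc by (simp add: sup01_def)
          then show False using mle[OF i] m0 by simp
        qed
        moreover have "bdd_above S" unfolding S_def by (intro bdd_aboveI[of _ 1]) auto
        moreover have "c < Sup S" using mle[OF i] c lc \<open>S \<noteq> {}\<close> by (simp add: sup01_def)
        ultimately obtain c' where c': "c' \<in> S" "c < c'" using less_cSup_iff by blast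
        then have "chi2_quantile \<nu> c \<le> chi2_quantile \<nu> c'"
          using c by (intro q_mono[OF assms(1)]) (auto simp: S_def)
        then show ?thesis using c' by (auto simp: S_def)
      qed
      have "(\<Sum>i=1..M. chi2_quantile \<nu> c) < (\<Sum>i=1..M. Kstar i)"
        using assms(2) by (intro sum_strict_mono lt) auto
      moreover have "c < 1"
      proof -
        have "1 \<in> {1..M}" using assms(2) by simp
        have "local_conf \<nu> (Kstar 1) \<le> 1" unfolding local_conf_def sup01_def
          by (auto intro!: cSup_least)
        then show ?thesis using mle[OF \<open>1 \<in> {1..M}\<close>] c by simp
      qed
      ultimately show ?thesis using c unfolding G_def by auto
    qed
    have "G \<noteq> {}" using inG[of "m/2"] m0 by auto
    have "m \<le> Sup G"
      by (rule dense_le_bounded[OF m0]) (auto intro: cSup_upper[OF inG Gb])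
    then show ?thesis using gc \<open>G \<noteq> {}\<close> m_def by (simp add: sup01_def)
  qed
qed

end
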